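(* For $i=1,2$ let $\alpha_i\in[-1,1]$ and let $f_{\alpha_i}=h_{\alpha_i}+\overline{g_{\alpha_i}}\in S_H$ with $h_{\alpha_i}(z)+g_{\alpha_i}(z)=\dfrac{z(1-\alpha_i z)}{1-z^2}$ for $z\in E$. Let $0\le t\le 1$ and $f=tf_{\alpha_1}+(1-t)f_{\alpha_2}$. If $f$ is locally univalent and sense-preserving in $E$, then $f\in S_H$ and $f$ maps $E$ onto a domain convex in the direction of the imaginary axis.
   Context: $E=\{z\in\mathbb{C}:|z|<1\}$. A harmonic mapping $f=h+\overline{g}$ on $E$ (with $h,g$ analytic) is locally univalent and sense-preserving iff $h'\neq0$ in $E$ and its dilatation $\omega=g'/h'$ satisfies $|\omega|<1$ in $E$. $S_H$ denotes the class of harmonic, univalent, sense-preserving mappings $f=h+\overline{g}$ of $E$ normalized by $f(0)=0$, $f_z(0)=1$. A domain $\Omega$ is convex in the direction of the imaginary axis if every line parallel to the imaginary axis has connected or empty intersection with $\Omega$. *)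

theory Defs
  imports "HOL-Analysis.Analysis"
begin

definition unit_disc :: "complex set" ("\<E>") where
  "unit_disc = ball 0 1"

definition harm :: "(complex \<Rightarrow> complex) \<Rightarrow> (complex \<Rightarrow> complex) \<Rightarrow> complex \<Rightarrow> complex" where
  "harm h g = (\<lambda>z. h z + cnj (g z))"

definition loc_univ_sense_pres :: "(complex \<Rightarrow> complex) \<Rightarrow> (complex \<Rightarrow> complex) \<Rightarrow> bool" where
  "loc_univ_sense_pres h g \<longleftrightarrow>
     (\<forall>z\<in>\<E>. deriv h z \<noteq> 0 \<and> norm (deriv g z / deriv h z) < 1)"

definition in_S_H :: "(complex \<Rightarrow> complex) \<Rightarrow> (complex \<Rightarrow> complex) \<Rightarrow> bool" where
  "in_S_H h g \<longleftrightarrow>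
     h holomorphic_on \<E> \<and> g holomorphic_on \<E> \<and>
     inj_on (harm h g) \<E> \<and> loc_univ_sense_pres h g \<and>
     harm h g 0 = 0 \<and> deriv h 0 = 1"

definition convex_imag_dir :: "complex set \<Rightarrow> bool" where
  "convex_imag_dir \<Omega> \<longleftrightarrow> (\<forall>x::real. connected (\<Omega> \<inter> {w. Re w = x}))"

end

theory Submission imports Defs "HOL-Analysis.Analysis" begin

definition Phi :: "real \<Rightarrow> real \<Rightarrow> complex \<Rightarrow> complex" where
  "Phi a b w = of_real a * w - of_real b / w"

lemma halfplane_prod:
  assumes "Re u > 0" "Re v > 0" "Im (u * v) = 0" shows "Re (u * v) > 0"
proof -
  have "Re u * Re (u * v) = Re v * ((Re u)^2 + (Im u)^2)"
  proof -
    have i: "Re u * Im v = - (Im u * Re v)" using assms(3) by (simp add: algebra_simps)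
    have "Re u * Re (u * v) = Re u * Re u * Re v - Im u * (Re u * Im v)" by (simp add: algebra_simps)
    also have "\<dots> = Re v * ((Re u)^2 + (Im u)^2)" unfolding i by (simp add: power2_eq_square algebra_simps)
    finally show ?thesis .
  qed
  moreover have "Re v * ((Re u)^2 + (Im u)^2) > 0" using assms by (simp add: add_pos_nonneg)
  ultimately show ?thesis using assms(1) by (metis zero_less_mult_pos)
qed

lemma Phi_inj:
  assumes "a \<ge> 0" "b \<ge> 0" "a + b = 1" "Re w1 > 0" "Re w2 > 0" "Phi a b w1 = Phi a b w2"
  shows "w1 = w2"
proof -
  have nz: "w1 \<noteq> 0" "w2 \<noteq> 0" using assms by auto
  have "(w1 - w2) * (of_real a * w1 * w2 + of_real b) = 0"
    using assms(6) nz unfolding Phi_def by (simp add: field_simps)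
  moreover have "of_real a * w1 * w2 + of_real b \<noteq> 0"
  proof
    assume h: "of_real a * w1 * w2 + of_real b = 0"
    show False
    proof (cases "a = 0")
      case True then show False using h assms(3) by simp
    next
      case False
      have h2: "of_real a * (w1 * w2) = - of_real b" using h by (simp add: eq_neg_iff_add_eq_0 mult.assoc)
      then have "w1 * w2 = - of_real (b / a)" using False by (simp add: field_simps)
      then have "Im (w1 * w2) = 0" "Re (w1 * w2) \<le> 0" using assms False by auto
      then show False using halfplane_prod[OF assms(4,5)] by auto
    qed
  qed
  ultimately show ?thesis by simp
qed
lemma Phi_im_bound:
  assumes "a > 0" "b > 0" "Re w > 0" "Re (Phi a b w) = 0"
  shows "(Im (Phi a b w))^2 < 4 * a * b"
proof -
  define x where "x = Re w"
  define y where "y = Im w"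
  define n where "n = x^2 + y^2"
  have n: "n > 0" using assms(3) unfolding n_def x_def by (intro add_pos_nonneg) auto
  have re: "Re (Phi a b w) = a * x - b * x / n"
    unfolding Phi_def x_def n_def y_def by (simp add: Re_divide)
  have im: "Im (Phi a b w) = a * y + b * y / n"
    unfolding Phi_def x_def n_def y_def by (simp add: Im_divide)
  have "a * x * n = b * x" using assms(4) n unfolding re by (simp add: field_simps)
  then have an: "a * n = b" using assms(3) x_def by simp
  have "Im (Phi a b w) = 2 * a * y" unfolding im using an n by (simp add: field_simps)
  moreover have "y^2 < n" unfolding n_def using assms(3) x_def by simp
  moreover have "(2*a*y)^2 = 4*a*(a*y^2)" by (simp add: power2_eq_square)
  moreover have "a*y^2 < a*n" using \<open>y^2 < n\<close> assms(1) by simp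
  ultimately show ?thesis using an assms(1) by simp
qed

lemma root_imag:
  assumes "a > 0" "b > 0" "of_real a * w^2 - z * w - of_real b = 0" "Re w = 0"
  shows "Re z = 0 \<and> (Im z)^2 \<ge> 4 * a * b"
proof -
  define y where "y = Im w"
  have w: "w = \<i> * of_real y" using assms(4) y_def by (simp add: complex_eq_iff)
  have e1: "- a * y^2 - b + y * Im z = 0"
    using arg_cong[OF assms(3), of Re] unfolding w by (simp add: power2_eq_square algebra_simps)
  have e2: "- y * Re z = 0"
    using arg_cong[OF assms(3), of Im] unfolding w by (auto simp add: power2_eq_square)
  have y0: "y \<noteq> 0" using e1 assms by auto
  have "Re z = 0" using e2 y0 by simp
  moreover have "(y * Im z)^2 \<ge> 4 * a * b * y^2"
  proof -
    have "y * Im z = a * y^2 + b" using e1 by simp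
    moreover have "(a * y^2 + b)^2 - 4 * a * b * y^2 = (a * y^2 - b)^2" by (simp add: power2_eq_square algebra_simps)
    moreover have "(a * y^2 - b)^2 \<ge> 0" by simp
    ultimately show ?thesis by (metis diff_ge_0_iff_ge)
  qed
  then have "y^2 * (4 * a * b) \<le> y^2 * (Im z)^2" by (simp add: power_mult_distrib mult.commute)
  then have "(Im z)^2 \<ge> 4 * a * b" using y0 by (simp add: mult_le_cancel_left_pos)
  ultimately show ?thesis by simp
qed

lemma Phi_surj:
  assumes "a > 0" "b > 0" "\<not> (Re z = 0 \<and> (Im z)^2 \<ge> 4 * a * b)"
  shows "\<exists>w. Re w > 0 \<and> Phi a b w = z"
proof -
  define d where "d = csqrt (z^2 + 4 * of_real a * of_real b)"
  define w1 where "w1 = (z + d) / (2 * of_real a)"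
  define w2 where "w2 = (z - d) / (2 * of_real a)"
  have a0: "complex_of_real a \<noteq> 0" using assms by simp
  have dd: "d^2 = z^2 + 4 * of_real a * of_real b" unfolding d_def by simp
  have key: "of_real a * w^2 - z * w - of_real b = 0" if "2 * of_real a * w = z + e" "e^2 = d^2" for w e
  proof -
    have "4 * of_real a * (of_real a * w^2 - z * w - of_real b) = (2 * of_real a * w)^2 - 2 * z * (2 * of_real a * w) - 4 * of_real a * of_real b"
      by (simp add: algebra_simps power2_eq_square)
    also have "\<dots> = (z + e)^2 - 2 * z * (z + e) - 4 * of_real a * of_real b" unfolding that(1) ..
    also have "\<dots> = e^2 - z^2 - 4 * of_real a * of_real b" by (simp add: algebra_simps power2_eq_square)
    also have "\<dots> = 0" using that(2) dd by simp
    finally show ?thesis using a0 by simp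
  qed
  have q1: "of_real a * w1^2 - z * w1 - of_real b = 0"
    by (rule key[of w1 d]) (use a0 in \<open>simp_all add: w1_def\<close>)
  have q2: "of_real a * w2^2 - z * w2 - of_real b = 0"
    by (rule key[of w2 "-d"]) (use a0 in \<open>simp_all add: w2_def\<close>)
  have "(2 * of_real a * w1) * (2 * of_real a * w2) = (z + d) * (z - d)"
    using a0 by (simp add: w1_def w2_def)
  also have "\<dots> = - 4 * of_real a * of_real b" using dd by (simp add: algebra_simps power2_eq_square)
  finally have "of_real a * (of_real a * (w1 * w2) + of_real b) = 0" by (simp add: algebra_simps)
  then have "of_real a * (w1 * w2) = - of_real b" using a0 by (simp add: eq_neg_iff_add_eq_0)
  then have prod: "w1 * w2 = - of_real (b / a)" using a0 by (simp add: field_simps)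
  have sol: "Phi a b w = z" if "of_real a * w^2 - z * w - of_real b = 0" for w
  proof -
    have "w \<noteq> 0" using that assms by auto
    then show ?thesis using that unfolding Phi_def by (simp add: field_simps power2_eq_square)
  qed
  have "Re w1 > 0 \<or> Re w2 > 0"
  proof (rule ccontr)
    assume "\<not> ?thesis"
    then have le: "Re w1 \<le> 0" "Re w2 \<le> 0" by auto
    show False
    proof (cases "Re w1 = 0 \<or> Re w2 = 0")
      case True then show False using root_imag[OF assms(1,2) q1] root_imag[OF assms(1,2) q2] assms(3) by auto
    next
      case False
      then have neg: "Re (-w1) > 0" "Re (-w2) > 0" using le by auto
      have m: "(-w1) * (-w2) = - of_real (b/a)" using prod by simp
      have "Im ((-w1) * (-w2)) = 0" unfolding m by simp
      then have "Re ((-w1) * (-w2)) > 0" using halfplane_prod neg by blast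
      then have "-(b/a) > 0" unfolding m by simp
      moreover have "b / a > 0" using assms by simp
      ultimately show False by simp
    qed
  qed
  then show ?thesis using sol q1 q2 by blast
qed
lemma Phi_vert:
  assumes "a \<ge> 0" "b \<ge> 0" "a + b = 1" "Re w1 > 0" "Re w2 > 0"
    "Re (Phi a b w1) = Re (Phi a b w2)"
    "Im (Phi a b w1) \<le> s" "s \<le> Im (Phi a b w2)"
  shows "\<exists>w. Re w > 0 \<and> Phi a b w = Complex (Re (Phi a b w1)) s"
proof -
  define c where "c = Re (Phi a b w1)"
  define \<zeta> where "\<zeta> = Complex c s"
  show ?thesis
  proof (cases "a = 0")
    case True
    then have b1: "b = 1" using assms by simp
    have "c < 0" unfolding c_def Phi_def using True b1 assms(4)
      by (simp add: Re_divide add_pos_nonneg divide_pos_pos)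
    then have z0: "\<zeta> \<noteq> 0" unfolding \<zeta>_def by (auto simp: complex_eq_iff)
    have cs: "c^2 + s^2 > 0" using \<open>c < 0\<close> by (intro add_pos_nonneg) auto
    have "Re (-1 / \<zeta>) > 0" using \<open>c < 0\<close> unfolding \<zeta>_def
      by (simp add: Re_divide divide_neg_pos cs)
    moreover have "Phi a b (-1 / \<zeta>) = \<zeta>" unfolding Phi_def using True b1 z0 by simp
    ultimately show ?thesis unfolding c_def \<zeta>_def by blast
  next
    case a0: False
    show ?thesis
    proof (cases "b = 0")
      case True
      then have "a = 1" using assms by simp
      then have "Re \<zeta> > 0" "Phi a b \<zeta> = \<zeta>" unfolding \<zeta>_def c_def Phi_def using True assms(4) by auto
      then show ?thesis unfolding c_def \<zeta>_def by blast
    next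
      case b0: False
      have ap: "a > 0" and bp: "b > 0" using a0 b0 assms by auto
      have "\<not> (Re \<zeta> = 0 \<and> (Im \<zeta>)^2 \<ge> 4 * a * b)"
      proof
        assume h: "Re \<zeta> = 0 \<and> (Im \<zeta>)^2 \<ge> 4 * a * b"
        then have c0: "c = 0" unfolding \<zeta>_def by simp
        have s1: "(Im (Phi a b w1))^2 < 4 * a * b"
          using Phi_im_bound[OF ap bp assms(4)] c0 c_def by simp
        have s2: "(Im (Phi a b w2))^2 < 4 * a * b"
          using Phi_im_bound[OF ap bp assms(5)] c0 c_def assms(6) by simp
        have "s * s < 4 * a * b"
        proof (cases "s \<ge> 0")
          case True
          then have "s * s \<le> Im (Phi a b w2) * Im (Phi a b w2)" using assms(8) by (intro mult_mono) auto
          then show ?thesis using s2 by (simp add: power2_eq_square)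
        next
          case False
          then have "(-s) * (-s) \<le> (- Im (Phi a b w1)) * (- Im (Phi a b w1))" using assms(7) by (intro mult_mono) auto
          then show ?thesis using s1 by (simp add: power2_eq_square)
        qed
        then show False using h unfolding \<zeta>_def by (simp add: power2_eq_square)
      qed
      then show ?thesis using Phi_surj[OF ap bp] unfolding \<zeta>_def c_def by blast
    qed
  qed
qed

lemma norm_lt1_iff: "norm (z::complex) < 1 \<longleftrightarrow> (Re z)^2 + (Im z)^2 < 1"
  by (simp add: cmod_def)

lemma cayley_re:
  assumes "norm z < 1" shows "Re ((1 + z) / (1 - z)) > 0"
proof -
  have h: "(Re z)^2 + (Im z)^2 < 1" using assms norm_lt1_iff by blast
  have "(1 - Re z)^2 + (Im z)^2 > 0"
  proof -
    have "Re z < 1" using h by (smt (verit) power2_eq_square zero_le_power2 mult_le_cancel_left1 one_le_power)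
    then show ?thesis by (intro add_pos_nonneg) auto
  qed
  moreover have "(1 + Re z) * (1 - Re z) + Im z * (- Im z) > 0" using h by (simp add: power2_eq_square algebra_simps)
  ultimately show ?thesis by (simp add: Re_divide)
qed

lemma cayley_inv:
  assumes "Re w > 0"
  shows "norm ((w - 1) / (w + 1)) < 1" "(1 + (w - 1) / (w + 1)) / (1 - (w - 1) / (w + 1)) = w"
proof -
  have w1: "w + 1 \<noteq> 0" using assms by (auto simp: complex_eq_iff)
  have "norm (w - 1) < norm (w + 1)"
  proof -
    have "(Re w - 1)^2 + (Im w)^2 < (Re w + 1)^2 + (Im w)^2" using assms by (simp add: power2_eq_square algebra_simps)
    then show ?thesis by (simp add: cmod_def)
  qed
  then show "norm ((w - 1) / (w + 1)) < 1" using w1 by (simp add: norm_divide divide_less_eq)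
  have e1: "1 + (w - 1) / (w + 1) = 2 * w / (w + 1)" using w1 by (simp add: field_simps)
  have e2: "1 - (w - 1) / (w + 1) = 2 / (w + 1)" using w1 by (simp add: field_simps)
  show "(1 + (w - 1) / (w + 1)) / (1 - (w - 1) / (w + 1)) = w" unfolding e1 e2 using w1 by simp
qed

lemma cayley_inj:
  fixes z1 z2 :: complex
  assumes "norm z1 < 1" "norm z2 < 1" "(1 + z1) / (1 - z1) = (1 + z2) / (1 - z2)"
  shows "z1 = z2"
proof -
  have "z1 \<noteq> 1" proof assume "z1 = 1" then show False using assms(1) by simp qed
  moreover have "z2 \<noteq> 1" proof assume "z2 = 1" then show False using assms(2) by simp qed
  ultimately have "(1 + z1) * (1 - z2) = (1 + z2) * (1 - z1)" using assms(3) by (simp add: field_simps)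
  then show ?thesis by (simp add: algebra_simps)
qed

definition Pf :: "real \<Rightarrow> complex \<Rightarrow> complex" where
  "Pf \<alpha> z = z * (1 - of_real \<alpha> * z) / (1 - z^2)"

lemma Pf_Phi:
  assumes "norm z < 1"
  shows "Pf \<alpha> z = (Phi ((1 - \<alpha>)/2) ((1 + \<alpha>)/2) ((1 + z) / (1 - z)) + of_real \<alpha>) / 2"
proof -
  have "z \<noteq> 1" proof assume "z = 1" then show False using assms by simp qed
  have "z \<noteq> -1" proof assume "z = -1" then show False using assms by simp qed
  have n1: "1 - z \<noteq> 0" using \<open>z \<noteq> 1\<close> by simp
  have n1': "1 + z \<noteq> 0"
  proof
    assume "1 + z = 0"
    then have "z = -1" by (metis add.commute eq_neg_iff_add_eq_0)
    then show False using \<open>z \<noteq> -1\<close> by simp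
  qed
  have n2: "1 - z * z \<noteq> 0"
  proof -
    have "1 - z * z = (1 - z) * (1 + z)" by (simp add: algebra_simps)
    then show ?thesis using n1 n1' by simp
  qed
  define w where "w = (1 + z) / (1 - z)"
  define A where "A = complex_of_real ((1 - \<alpha>)/2)"
  define B where "B = complex_of_real ((1 + \<alpha>)/2)"
  have fz: "1 - z * z = (1 - z) * (1 + z)" by (simp add: algebra_simps)
  have P1: "(1 - z * z) * w = (1 + z) * (1 + z)" unfolding w_def fz using n1 by simp
  have P2: "(1 - z * z) * (1 / w) = (1 - z) * (1 - z)" unfolding w_def fz using n1' by simp
  have A2: "2 * A = 1 - of_real \<alpha>" unfolding A_def by simp
  have B2: "2 * B = 1 + of_real \<alpha>" unfolding B_def by simp
  have "2 * (1 - z * z) * (Phi ((1 - \<alpha>)/2) ((1 + \<alpha>)/2) ((1 + z) / (1 - z)) + of_real \<alpha>)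
      = (2 * A) * ((1 - z * z) * w) - (2 * B) * ((1 - z * z) * (1 / w)) + 2 * (1 - z * z) * of_real \<alpha>"
    unfolding Phi_def A_def[symmetric] B_def[symmetric] w_def[symmetric] by (simp add: algebra_simps)
  also have "\<dots> = (1 - of_real \<alpha>) * (1 + z) * (1 + z) - (1 + of_real \<alpha>) * (1 - z) * (1 - z) + 2 * (1 - z * z) * of_real \<alpha>"
    unfolding P1 P2 A2 B2 by (simp add: algebra_simps)
  also have "\<dots> = 4 * (z * (1 - of_real \<alpha> * z))" by (simp add: algebra_simps)
  finally have e: "2 * (1 - z * z) * (Phi ((1 - \<alpha>)/2) ((1 + \<alpha>)/2) ((1 + z) / (1 - z)) + of_real \<alpha>) = 4 * (z * (1 - of_real \<alpha> * z))" .
  have "(1 - z * z) * ((Phi ((1 - \<alpha>)/2) ((1 + \<alpha>)/2) ((1 + z) / (1 - z)) + of_real \<alpha>) / 2)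
     = (2 * (1 - z * z) * (Phi ((1 - \<alpha>)/2) ((1 + \<alpha>)/2) ((1 + z) / (1 - z)) + of_real \<alpha>)) / 4" by simp
  also have "\<dots> = z * (1 - of_real \<alpha> * z)" unfolding e by simp
  finally have "(Phi ((1 - \<alpha>)/2) ((1 + \<alpha>)/2) ((1 + z) / (1 - z)) + of_real \<alpha>) / 2 = z * (1 - of_real \<alpha> * z) / (1 - z * z)"
    using n2 by (simp add: eq_divide_eq mult.commute)
  then show ?thesis unfolding Pf_def power2_eq_square by (rule sym)
qed

lemma Pf_Phi':
  assumes "norm z < 1"
  shows "Phi ((1 - \<alpha>)/2) ((1 + \<alpha>)/2) ((1 + z) / (1 - z)) = 2 * Pf \<alpha> z - of_real \<alpha>"
proof -
  have h: "2 * Pf \<alpha> z = Phi ((1 - \<alpha>)/2) ((1 + \<alpha>)/2) ((1 + z) / (1 - z)) + of_real \<alpha>"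
    using Pf_Phi[OF assms, of \<alpha>] by (simp add: mult.commute)
  show ?thesis unfolding h by simp
qed

lemma Pf_inj:
  assumes "-1 \<le> \<alpha>" "\<alpha> \<le> 1" "norm z1 < 1" "norm z2 < 1" "Pf \<alpha> z1 = Pf \<alpha> z2"
  shows "z1 = z2"
proof -
  have "(1 + z1) / (1 - z1) = (1 + z2) / (1 - z2)"
  proof (rule Phi_inj[of "(1 - \<alpha>)/2" "(1 + \<alpha>)/2"])
    show "Phi ((1 - \<alpha>)/2) ((1 + \<alpha>)/2) ((1 + z1) / (1 - z1)) = Phi ((1 - \<alpha>)/2) ((1 + \<alpha>)/2) ((1 + z2) / (1 - z2))"
      using Pf_Phi'[OF assms(3)] Pf_Phi'[OF assms(4)] assms(5) by simp
  qed (use assms cayley_re[OF assms(3)] cayley_re[OF assms(4)] in \<open>auto simp: field_simps\<close>)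
  then show ?thesis using cayley_inj assms by blast
qed

lemma Pf_vert:
  assumes "-1 \<le> \<alpha>" "\<alpha> \<le> 1" "norm z1 < 1" "norm z2 < 1" "Re (Pf \<alpha> z1) = Re (Pf \<alpha> z2)"
    "Im (Pf \<alpha> z1) \<le> s" "s \<le> Im (Pf \<alpha> z2)"
  shows "\<exists>z. norm z < 1 \<and> Pf \<alpha> z = Complex (Re (Pf \<alpha> z1)) s"
proof -
  define a where "a = (1 - \<alpha>)/2"
  define b where "b = (1 + \<alpha>)/2"
  define w1 where "w1 = (1 + z1) / (1 - z1)"
  define w2 where "w2 = (1 + z2) / (1 - z2)"
  have e1: "Phi a b w1 = 2 * Pf \<alpha> z1 - of_real \<alpha>" unfolding a_def b_def w1_def using Pf_Phi'[OF assms(3)] .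
  have e2: "Phi a b w2 = 2 * Pf \<alpha> z2 - of_real \<alpha>" unfolding a_def b_def w2_def using Pf_Phi'[OF assms(4)] .
  obtain w where w: "Re w > 0" "Phi a b w = Complex (Re (Phi a b w1)) (2 * s)"
  proof -
    have "\<exists>w. Re w > 0 \<and> Phi a b w = Complex (Re (Phi a b w1)) (2 * s)"
    proof (rule Phi_vert)
      show "a \<ge> 0" "b \<ge> 0" "a + b = 1" using assms(1,2) unfolding a_def b_def by (auto simp: field_simps)
      show "Re w1 > 0" "Re w2 > 0" unfolding w1_def w2_def using cayley_re assms(3,4) by auto
      show "Re (Phi a b w1) = Re (Phi a b w2)" unfolding e1 e2 using assms(5) by simp
      show "Im (Phi a b w1) \<le> 2 * s" "2 * s \<le> Im (Phi a b w2)" unfolding e1 e2 using assms(6,7) by auto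
    qed
    then show ?thesis using that by blast
  qed
  define z where "z = (w - 1) / (w + 1)"
  have z: "norm z < 1" "(1 + z) / (1 - z) = w" using cayley_inv[OF w(1)] unfolding z_def by auto
  have "Pf \<alpha> z = (Phi a b w + of_real \<alpha>) / 2" using Pf_Phi[OF z(1), of \<alpha>] unfolding z(2) a_def b_def .
  also have "\<dots> = Complex (Re (Pf \<alpha> z1)) s" unfolding w(2) e1 by (simp add: complex_eq_iff)
  finally show ?thesis using z(1) by blast
qed

lemma dil_re:
  fixes a b :: complex
  assumes "a \<noteq> 0" "norm (b / a) < 1"
  shows "a + b \<noteq> 0" "Re ((a - b) * inverse (a + b)) > 0"
proof -
  define w where "w = b / a"
  have h: "(Re w)^2 + (Im w)^2 < 1" using assms(2) norm_lt1_iff unfolding w_def by blast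
  have w1: "1 + w \<noteq> 0"
  proof
    assume "1 + w = 0"
    then have "w = -1" by (metis add.commute eq_neg_iff_add_eq_0)
    then show False using assms(2) unfolding w_def by simp
  qed
  have b: "b = a * w" unfolding w_def using assms(1) by simp
  have ab: "a + b = a * (1 + w)" unfolding b by (simp add: algebra_simps)
  show "a + b \<noteq> 0" unfolding ab using assms(1) w1 by simp
  have e: "(a - b) * inverse (a + b) = (1 - w) / (1 + w)"
  proof -
    have ab2: "a - b = a * (1 - w)" unfolding b by (simp add: algebra_simps)
    have "(a - b) * inverse (a + b) = (a * (1 - w)) / (a * (1 + w))" unfolding ab ab2 by (simp add: divide_inverse)
    also have "\<dots> = (1 - w) / (1 + w)" using assms(1) by (rule mult_divide_mult_cancel_left)
    finally show ?thesis .
  qed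
  have d: "(Re (1 + w))^2 + (Im (1 + w))^2 > 0"
  proof -
    have "(Re (1 + w))^2 + (Im (1 + w))^2 \<noteq> 0" using w1 by (simp add: complex_eq_iff)
    moreover have "(Re (1 + w))^2 + (Im (1 + w))^2 \<ge> 0" by simp
    ultimately show ?thesis by linarith
  qed
  have "Re (1 - w) * Re (1 + w) + Im (1 - w) * Im (1 + w) > 0" using h by (simp add: power2_eq_square algebra_simps)
  then show "Re ((a - b) * inverse (a + b)) > 0" unfolding e Re_divide using d by simp
qed

lemma shear:
  fixes H G P :: "complex \<Rightarrow> complex"
  assumes holH: "H holomorphic_on \<E>" and holG: "G holomorphic_on \<E>"
    and sum: "\<forall>z\<in>\<E>. H z + G z = P z"
    and lu: "loc_univ_sense_pres H G"
    and Pinj: "inj_on P \<E>"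
    and Pvert: "\<And>z1 z2 s. z1 \<in> \<E> \<Longrightarrow> z2 \<in> \<E> \<Longrightarrow> Re (P z1) = Re (P z2) \<Longrightarrow>
        Im (P z1) \<le> s \<Longrightarrow> s \<le> Im (P z2) \<Longrightarrow> Complex (Re (P z1)) s \<in> P ` \<E>"
  shows "inj_on (harm H G) \<E> \<and> convex_imag_dir (harm H G ` \<E>)"
proof -
  have oE: "open \<E>" unfolding unit_disc_def by simp
  define dP where "dP z = deriv H z + deriv G z" for z
  define \<psi> where "\<psi> z = H z - G z" for z
  define Q where "Q = inv_into \<E> P"
  define Gf where "Gf \<zeta> = \<psi> (Q \<zeta>)" for \<zeta>
  define D where "D z = (deriv H z - deriv G z) * inverse (dP z)" for z
  have QP: "Q (P z) = z" if "z \<in> \<E>" for z unfolding Q_def using Pinj that by simp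
  have dH: "(H has_field_derivative deriv H z) (at z)" if "z \<in> \<E>" for z
    using holomorphic_derivI[OF holH oE that] .
  have dG: "(G has_field_derivative deriv G z) (at z)" if "z \<in> \<E>" for z
    using holomorphic_derivI[OF holG oE that] .
  have dPz: "(P has_field_derivative dP z) (at z)" if "z \<in> \<E>" for z
  proof (rule has_field_derivative_transform_within_open[OF _ oE that])
    show "((\<lambda>z. H z + G z) has_field_derivative dP z) (at z)" unfolding dP_def
      using dH[OF that] dG[OF that] by (rule DERIV_add)
  qed (use sum in auto)
  have dil: "dP z \<noteq> 0 \<and> Re (D z) > 0" if "z \<in> \<E>" for z
    using lu that dil_re[of "deriv H z" "deriv G z"] unfolding loc_univ_sense_pres_def dP_def D_def by auto
  have contP: "continuous_on \<E> P"
  proof -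
    have "continuous_on \<E> (\<lambda>z. H z + G z)"
      using holH holG by (intro continuous_intros holomorphic_on_imp_continuous_on)
    then show ?thesis using sum by (metis (mono_tags, lifting) continuous_on_cong)
  qed
  have dQ: "(Q has_field_derivative inverse (dP z)) (at (P z))" if "z \<in> \<E>" for z
  proof -
    have "(Q has_derivative (*) (inverse (dP z))) (at (P z))"
    proof (rule has_derivative_inverse_strong[OF oE that contP])
      show "\<And>x. x \<in> \<E> \<Longrightarrow> Q (P x) = x" using QP .
      show "(P has_derivative (*) (dP z)) (at z)" using dPz[OF that] by (simp add: has_field_derivative_def)
      show "(*) (dP z) \<circ> (*) (inverse (dP z)) = id" using dil[OF that] by (auto simp: fun_eq_iff)
    qed
    then show ?thesis by (simp add: has_field_derivative_def)
  qed
  have dGf: "(Gf has_field_derivative D z) (at (P z))" if "z \<in> \<E>" for z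
  proof -
    have d\<psi>: "(\<psi> has_field_derivative (deriv H z - deriv G z)) (at (Q (P z)))"
      unfolding QP[OF that] \<psi>_def using dH[OF that] dG[OF that] by (rule DERIV_diff)
    show ?thesis unfolding Gf_def D_def using DERIV_chain2[OF d\<psi> dQ[OF that]] .
  qed
  have harm_re: "Re (harm H G z) = Re (P z)" if "z \<in> \<E>" for z
  proof -
    have "P z = H z + G z" using sum that by simp
    then show ?thesis by (simp add: harm_def)
  qed
  have harm_im: "Im (harm H G z) = Im (Gf (P z))" if "z \<in> \<E>" for z
    unfolding Gf_def QP[OF that] \<psi>_def harm_def by simp
  have mono: "Im (Gf (P z1)) < Im (Gf (P z2))"
    if z12: "z1 \<in> \<E>" "z2 \<in> \<E>" "Re (P z1) = Re (P z2)" "Im (P z1) < Im (P z2)" for z1 z2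
  proof -
    define c where "c = Re (P z1)"
    define F where "F s = Im (Gf (Complex c s))" for s
    have "F (Im (P z1)) < F (Im (P z2))"
    proof (rule DERIV_pos_imp_increasing[OF z12(4)])
      fix x assume x: "Im (P z1) \<le> x" "x \<le> Im (P z2)"
      have "Complex c x \<in> P ` \<E>" unfolding c_def using Pvert[OF z12(1,2,3) x] .
      then obtain z where z: "z \<in> \<E>" "P z = Complex c x" by auto
      have cd: "((\<lambda>s. Complex c s) has_derivative (\<lambda>h. \<i> * of_real h)) (at x)"
      proof -
        have "(\<lambda>s. Complex c s) = (\<lambda>s. of_real c + \<i> * of_real s)" by (auto simp: complex_eq_iff fun_eq_iff)
        moreover have "((\<lambda>s. of_real c + \<i> * of_real s) has_derivative (\<lambda>h. \<i> * of_real h)) (at x)"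
          by (auto intro!: derivative_eq_intros)
        ultimately show ?thesis by simp
      qed
      have "((Gf \<circ> (\<lambda>s. Complex c s)) has_derivative ((*) (D z) \<circ> (\<lambda>h. \<i> * of_real h))) (at x)"
        by (rule diff_chain_at[OF cd]) (use dGf[OF z(1)] z(2) in \<open>simp add: has_field_derivative_def\<close>)
      then have "((\<lambda>s. Im ((Gf \<circ> (\<lambda>s. Complex c s)) s)) has_derivative (\<lambda>h. Im (((*) (D z) \<circ> (\<lambda>h. \<i> * of_real h)) h))) (at x)"
        by (rule has_derivative_Im)
      moreover have "(\<lambda>h. Im (((*) (D z) \<circ> (\<lambda>h. \<i> * of_real h)) h)) = (*) (Re (D z))" by (auto simp: fun_eq_iff)
      ultimately have "(F has_field_derivative Re (D z)) (at x)" unfolding F_def has_field_derivative_def by (simp add: o_def)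
      then show "\<exists>y. (F has_field_derivative y) (at x) \<and> y > 0" using dil[OF z(1)] by blast
    qed
    moreover have "Complex c (Im (P z1)) = P z1" "Complex c (Im (P z2)) = P z2"
      using z12(3) unfolding c_def by (auto simp: complex_eq_iff)
    ultimately show ?thesis unfolding F_def by simp
  qed
  have inj: "inj_on (harm H G) \<E>"
  proof (rule inj_onI)
    fix z1 z2 assume z: "z1 \<in> \<E>" "z2 \<in> \<E>" "harm H G z1 = harm H G z2"
    have re: "Re (P z1) = Re (P z2)" using harm_re[OF z(1)] harm_re[OF z(2)] z(3) by simp
    have im: "Im (Gf (P z1)) = Im (Gf (P z2))" using harm_im[OF z(1)] harm_im[OF z(2)] z(3) by simp
    show "z1 = z2"
    proof (rule ccontr)
      assume ne: "z1 \<noteq> z2"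
      then have "P z1 \<noteq> P z2" using Pinj z(1,2) by (meson inj_onD)
      then have "Im (P z1) \<noteq> Im (P z2)" using re by (auto simp: complex_eq_iff)
      then consider "Im (P z1) < Im (P z2)" | "Im (P z2) < Im (P z1)" by linarith
      then show False
      proof cases
        case 1 then show False using mono[OF z(1,2) re] im by simp
      next
        case 2 then show False using mono[OF z(2,1) re[symmetric]] im by simp
      qed
    qed
  qed
  have conv: "convex_imag_dir (harm H G ` \<E>)"
    unfolding convex_imag_dir_def
  proof
    fix x :: real
    define L where "L = P ` \<E> \<inter> {w. Re w = x}"
    define M where "M \<zeta> = Complex (Re \<zeta>) (Im (Gf \<zeta>))" for \<zeta>
    have eq: "harm H G ` \<E> \<inter> {w. Re w = x} = M ` L"
    proof (intro equalityI subsetI)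
      fix w assume "w \<in> harm H G ` \<E> \<inter> {w. Re w = x}"
      then obtain z where z: "z \<in> \<E>" "w = harm H G z" "Re w = x" by auto
      have "w = M (P z)" unfolding M_def using z harm_re[OF z(1)] harm_im[OF z(1)] by (simp add: complex_eq_iff)
      moreover have "P z \<in> L" unfolding L_def using z harm_re by auto
      ultimately show "w \<in> M ` L" by blast
    next
      fix w assume "w \<in> M ` L"
      then obtain z where z: "z \<in> \<E>" "Re (P z) = x" "w = M (P z)" unfolding L_def by auto
      then have "w = harm H G z" unfolding M_def using harm_re[OF z(1)] harm_im[OF z(1)] by (simp add: complex_eq_iff)
      then show "w \<in> harm H G ` \<E> \<inter> {w. Re w = x}" using z harm_re by auto
    qed
    have btw: "Complex (Re (P z1)) s \<in> P ` \<E>"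
      if "z1 \<in> \<E>" "z2 \<in> \<E>" "Re (P z1) = Re (P z2)" "Im (P z1) \<le> Im (P z2)"
         "s = (1 - u) * Im (P z1) + u * Im (P z2)" "0 \<le> u" "u \<le> 1" for z1 z2 s u
    proof (rule Pvert[OF that(1,2,3)])
      have "u * (Im (P z2) - Im (P z1)) \<ge> 0" "(1 - u) * (Im (P z2) - Im (P z1)) \<ge> 0"
        using that by auto
      then show "Im (P z1) \<le> s" "s \<le> Im (P z2)" unfolding that(5) by (auto simp: algebra_simps)
    qed
    have "convex L" unfolding convex_alt
    proof (intro ballI allI impI)
      fix \<zeta>1 \<zeta>2 and u :: real assume h: "\<zeta>1 \<in> L" "\<zeta>2 \<in> L" "0 \<le> u \<and> u \<le> 1"
      then obtain z1 z2 where z: "z1 \<in> \<E>" "z2 \<in> \<E>" "\<zeta>1 = P z1" "\<zeta>2 = P z2" "Re (P z1) = x" "Re (P z2) = x"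
        unfolding L_def by auto
      define p where "p = (1 - u) *\<^sub>R \<zeta>1 + u *\<^sub>R \<zeta>2"
      have rp: "Re p = x" unfolding p_def using z by (simp add: algebra_simps)
      have ip: "Im p = (1 - u) * Im \<zeta>1 + u * Im \<zeta>2" unfolding p_def by simp
      have "p \<in> P ` \<E>"
      proof (cases "Im \<zeta>1 \<le> Im \<zeta>2")
        case True
        have "Complex (Re (P z1)) (Im p) \<in> P ` \<E>"
          by (rule btw[of z1 z2 _ u]) (use z h True ip in auto)
        moreover have "Complex (Re (P z1)) (Im p) = p" using rp z by (simp add: complex_eq_iff)
        ultimately show ?thesis by simp
      next
        case False
        have "Complex (Re (P z2)) (Im p) \<in> P ` \<E>"
          by (rule btw[of z2 z1 _ "1 - u"]) (use z h False ip in \<open>auto simp: algebra_simps\<close>)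
        moreover have "Complex (Re (P z2)) (Im p) = p" using rp z by (simp add: complex_eq_iff)
        ultimately show ?thesis by simp
      qed
      then show "(1 - u) *\<^sub>R \<zeta>1 + u *\<^sub>R \<zeta>2 \<in> L" unfolding L_def p_def[symmetric] using rp by simp
    qed
    have "continuous_on L M"
    proof (rule continuous_at_imp_continuous_on, rule ballI)
      fix \<zeta> assume "\<zeta> \<in> L"
      then obtain z where z: "z \<in> \<E>" "\<zeta> = P z" unfolding L_def by auto
      have "isCont Gf \<zeta>" using DERIV_isCont[OF dGf[OF z(1)]] z(2) by simp
      moreover have "M = (\<lambda>\<zeta>. of_real (Re \<zeta>) + \<i> * of_real (Im (Gf \<zeta>)))"
        unfolding M_def by (auto simp: fun_eq_iff complex_eq_iff)
      ultimately show "isCont M \<zeta>" by (auto intro!: continuous_intros)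
    qed
    then show "connected (harm H G ` \<E> \<inter> {w. Re w = x})" unfolding eq
      by (rule connected_continuous_image) (rule convex_connected[OF \<open>convex L\<close>])
  qed
  show ?thesis using inj conv by blast
qed

theorem theorem2p1:
  fixes h1 g1 h2 g2 :: "complex \<Rightarrow> complex" and \<alpha>1 \<alpha>2 t :: real
  assumes "\<alpha>1 \<in> {-1..1}" and "\<alpha>2 \<in> {-1..1}"
    and "in_S_H h1 g1" and "in_S_H h2 g2"
    and "\<forall>z\<in>\<E>. h1 z + g1 z = z * (1 - of_real \<alpha>1 * z) / (1 - z\<^sup>2)"
    and "\<forall>z\<in>\<E>. h2 z + g2 z = z * (1 - of_real \<alpha>2 * z) / (1 - z\<^sup>2)"
    and "0 \<le> t" and "t \<le> 1"
    and "loc_univ_sense_pres (\<lambda>z. of_real t * h1 z + of_real (1 - t) * h2 z)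
                             (\<lambda>z. of_real t * g1 z + of_real (1 - t) * g2 z)"
  shows "in_S_H (\<lambda>z. of_real t * h1 z + of_real (1 - t) * h2 z)
                (\<lambda>z. of_real t * g1 z + of_real (1 - t) * g2 z)
       \<and> convex_imag_dir (harm (\<lambda>z. of_real t * h1 z + of_real (1 - t) * h2 z)
                               (\<lambda>z. of_real t * g1 z + of_real (1 - t) * g2 z) ` \<E>)"
proof -
  define H where "H = (\<lambda>z. of_real t * h1 z + of_real (1 - t) * h2 z)"
  define G where "G = (\<lambda>z. of_real t * g1 z + of_real (1 - t) * g2 z)"
  define \<alpha> where "\<alpha> = t * \<alpha>1 + (1 - t) * \<alpha>2"
  have oE: "open \<E>" unfolding unit_disc_def by simp
  have E0: "0 \<in> \<E>" unfolding unit_disc_def by simp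
  have memE: "z \<in> \<E> \<longleftrightarrow> norm z < 1" for z unfolding unit_disc_def by simp
  have a1: "-1 \<le> \<alpha>1" "\<alpha>1 \<le> 1" and a2: "-1 \<le> \<alpha>2" "\<alpha>2 \<le> 1" using assms(1,2) by auto
  have "- t \<le> t * \<alpha>1" "t * \<alpha>1 \<le> t"
    using a1 assms(7) mult_left_mono[of \<alpha>1 1 t] mult_left_mono[of "-1" \<alpha>1 t] by auto
  moreover have "- (1 - t) \<le> (1 - t) * \<alpha>2" "(1 - t) * \<alpha>2 \<le> 1 - t"
    using a2 assms(8) mult_left_mono[of \<alpha>2 1 "1 - t"] mult_left_mono[of "-1" \<alpha>2 "1 - t"] by auto
  ultimately have ab: "-1 \<le> \<alpha>" "\<alpha> \<le> 1" unfolding \<alpha>_def by linarith+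
  have S1: "h1 holomorphic_on \<E>" "g1 holomorphic_on \<E>" "harm h1 g1 0 = 0" "deriv h1 0 = 1"
    using assms(3) unfolding in_S_H_def by auto
  have S2: "h2 holomorphic_on \<E>" "g2 holomorphic_on \<E>" "harm h2 g2 0 = 0" "deriv h2 0 = 1"
    using assms(4) unfolding in_S_H_def by auto
  have holH: "H holomorphic_on \<E>" unfolding H_def using S1 S2 by (intro holomorphic_intros)
  have holG: "G holomorphic_on \<E>" unfolding G_def using S1 S2 by (intro holomorphic_intros)
  have sum: "\<forall>z\<in>\<E>. H z + G z = Pf \<alpha> z"
  proof
    fix z assume z: "z \<in> \<E>"
    have "H z + G z = of_real t * (h1 z + g1 z) + of_real (1 - t) * (h2 z + g2 z)"
      unfolding H_def G_def by (simp add: algebra_simps)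
    also have "\<dots> = of_real t * (z * (1 - of_real \<alpha>1 * z) / (1 - z\<^sup>2)) + of_real (1 - t) * (z * (1 - of_real \<alpha>2 * z) / (1 - z\<^sup>2))"
      using assms(5,6) z by simp
    also have "\<dots> = (of_real t * (z * (1 - of_real \<alpha>1 * z)) + of_real (1 - t) * (z * (1 - of_real \<alpha>2 * z))) / (1 - z\<^sup>2)"
      by (simp add: add_divide_distrib)
    also have "of_real t * (z * (1 - of_real \<alpha>1 * z)) + of_real (1 - t) * (z * (1 - of_real \<alpha>2 * z)) = z * (1 - of_real \<alpha> * z)"
      unfolding \<alpha>_def by (simp add: algebra_simps)
    finally show "H z + G z = Pf \<alpha> z" unfolding Pf_def .
  qed
  have Pinj: "inj_on (Pf \<alpha>) \<E>"
    by (rule inj_onI) (use Pf_inj[OF ab] memE in blast)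
  have Pvert: "Complex (Re (Pf \<alpha> z1)) s \<in> Pf \<alpha> ` \<E>"
    if zz: "z1 \<in> \<E>" "z2 \<in> \<E>" "Re (Pf \<alpha> z1) = Re (Pf \<alpha> z2)" "Im (Pf \<alpha> z1) \<le> s" "s \<le> Im (Pf \<alpha> z2)" for z1 z2 s
  proof -
    obtain z where "norm z < 1" "Pf \<alpha> z = Complex (Re (Pf \<alpha> z1)) s"
      using Pf_vert[OF ab _ _ zz(3,4,5)] zz(1,2) unfolding memE by blast
    then show ?thesis using memE by (metis image_eqI)
  qed
  have lu: "loc_univ_sense_pres H G" using assms(9) unfolding H_def G_def .
  have sh: "inj_on (harm H G) \<E> \<and> convex_imag_dir (harm H G ` \<E>)"
    by (rule shear[OF holH holG sum lu Pinj Pvert])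
  have h0: "harm H G 0 = of_real t * harm h1 g1 0 + of_real (1 - t) * harm h2 g2 0"
    unfolding harm_def H_def G_def by (simp add: algebra_simps)
  have dH0: "(H has_field_derivative (of_real t * deriv h1 0 + of_real (1 - t) * deriv h2 0)) (at 0)"
    unfolding H_def
    by (intro DERIV_add DERIV_cmult holomorphic_derivI[OF S1(1) oE E0] holomorphic_derivI[OF S2(1) oE E0])
  have "deriv H 0 = 1" using DERIV_imp_deriv[OF dH0] S1(4) S2(4) by simp
  then have "in_S_H H G" unfolding in_S_H_def using holH holG sh lu h0 S1(3) S2(3) by simp
  then show ?thesis using sh unfolding H_def G_def by blast
qed
end
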